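(* (i) Let $(s,p)\in R_{\Lambda,i}$. Then \[ \frac{\prod_{p'=1}^{i+1}L^{(s)}_{+,p'}}{\prod_{1\le p'\le i,\ p'\ne p}(\nu^{(s)}_{i,p}-\nu^{(s)}_{i,p'})}=\hbar'^2(p-i-1), \] and for $s'\ne s$, with $\Delta=a_s-a_{s'}$, \[ \frac{\prod_{p'=1}^{i+1}L^{(s')}_{+,p'}}{\prod_{p'=1}^{i}(\nu^{(s)}_{i,p}-\nu^{(s')}_{i,p'})}=\begin{cases}\hbar'(p-i-1)-\Delta&\text{if }l^{(s')}_{i+1}=l^{(s')}_i,\\ \hbar'(p-i)-\Delta&\text{if }l^{(s')}_{i+1}=l^{(s')}_i+1,\ l^{(s')}_i=i,\\ \dfrac{(\hbar'(p-l^{(s')}_i)-\Delta)(\hbar'(p-i-1)-\Delta)}{\hbar'(p-l^{(s')}_i-1)-\Delta}&\text{if }l^{(s')}_{i+1}=l^{(s')}_i+1,\ l^{(s')}_i\ne i.\end{cases} \] (ii) Let $(s,p)\in A_{\Lambda,i}$. Then \[ \frac{\prod_{p'=1}^{i-1}L^{(s)}_{-,p'}}{\prod_{1\le p'\le i,\ p'\ne p}(\nu^{(s)}_{i,p}-\nu^{(s)}_{i,p'})}=-\frac1{p-i-1}, \] and for $s'\ne s$, with $\Delta=a_s-a_{s'}$, \[ \frac{\prod_{p'=1}^{i-1}L^{(s')}_{-,p'}}{\prod_{p'=1}^{i}(\nu^{(s)}_{i,p}-\nu^{(s')}_{i,p'})}=\begin{cases}\dfrac1{\hbar'(p-i-1)-\Delta}&\text{if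 }l^{(s')}_{i-1}=l^{(s')}_i,\\ \dfrac1{\hbar'(p-i)-\Delta}&\text{if }l^{(s')}_{i-1}=l^{(s')}_i-1,\ l^{(s')}_i=i,\\ \dfrac{\hbar'(p-l^{(s')}_i-1)-\Delta}{(\hbar'(p-l^{(s')}_i)-\Delta)(\hbar'(p-i-1)-\Delta)}&\text{if }l^{(s')}_{i-1}=l^{(s')}_i-1,\ l^{(s')}_i\ne i.\end{cases} \]
   Context: Work over $\mathbb{C}(\varepsilon_1,\varepsilon_2)$ with $\hbar'=-(\varepsilon_1+\varepsilon_2)$, $t=N\varepsilon_2$, $N\ge2$. Fix $l\ge1$, integers $1\le p_1,\dots,p_l\le N$ and integers $r_1<\dots<r_l$, and set $a_s=tr_s+\hbar'(p_1+\cdots+p_s-\frac32)$. Let $\mathcal S$ be the set of collections of integers $\Lambda=(\lambda^{(s)}_{i,p})$, $1\le s\le l$, $1\le i\le N$, $1\le p\le i$, with $\lambda^{(s)}_{N,p}=1$ for $p\le p_s$ and $0$ for $p>p_s$, and $\lambda^{(s)}_{i,p}\ge\lambda^{(s)}_{i-1,p}\ge\lambda^{(s)}_{i,p+1}$ (so all entries are $0$ or $1$); put $\lambda^{(s)}_{i,p}=0$ for $p>i$. Let $l^{(s)}_i$ be the number of $p$ with $\lambda^{(s)}_{i,p}=1$. For $\Lambda\in\mathcal S$ and $1\le i\le N-1$, $\Lambda\pm\delta^{(s)}_{i,p}$ denotes $\Lambda$ with the $(s,i,p)$ entry changed by $\pm1$; $R_{\Lambda,i}=\{(s,p):\Lambda+\delta^{(s)}_{i,p}\in\mathcal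 S\}$, $A_{\Lambda,i}=\{(s,p):\Lambda-\delta^{(s)}_{i,p}\in\mathcal S\}$. Set $\nu^{(s)}_{i,p}=\hbar'(p-1-\lambda^{(s)}_{i,p})-a_s$, and for fixed $(s,i,p)$ and any $(s',p')$: $L^{(s')}_{+,p'}=\hbar'(p-p'+\lambda^{(s')}_{i+1,p'})-(a_s-a_{s'})$, $L^{(s')}_{-,p'}=\hbar'(p-p'-1+\lambda^{(s')}_{i-1,p'})-(a_s-a_{s'})$ (empty products are $1$). *)

theory Defs
  imports Complex_Main "HOL-Computational_Algebra.Polynomial" "HOL-Computational_Algebra.Fraction_Field"
begin

text \<open>The base field C(eps1, eps2), realised as the fraction field of C[eps1][eps2].\<close>
type_synonym ratfun = "complex poly poly fract"

definition eps1 :: ratfun where "eps1 = Fract [:[:0, 1:]:] 1"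
definition eps2 :: ratfun where "eps2 = Fract [:0, 1:] 1"

definition hb :: ratfun where "hb = - (eps1 + eps2)"
definition tt :: "nat \<Rightarrow> ratfun" where "tt N = of_nat N * eps2"

definition aa :: "nat \<Rightarrow> (nat \<Rightarrow> nat) \<Rightarrow> (nat \<Rightarrow> int) \<Rightarrow> nat \<Rightarrow> ratfun" where
  "aa N pp r s = tt N * of_int (r s) + hb * (of_nat (\<Sum>j = 1..s. pp j) - 3 / 2)"

text \<open>Collections Lambda = (lambda^(s)_{i,p}) are represented as functions s i p, extended
  by zero outside the index domain 1<=s<=l, 1<=i<=N, 1<=p<=i.\<close>
type_synonym pattern = "nat \<Rightarrow> nat \<Rightarrow> nat \<Rightarrow> int"

definition GT :: "nat \<Rightarrow> nat \<Rightarrow> (nat \<Rightarrow> nat) \<Rightarrow> pattern set" where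
  "GT N l pp = {lam.
     (\<forall>s i p. \<not> (1 \<le> s \<and> s \<le> l \<and> 1 \<le> i \<and> i \<le> N \<and> 1 \<le> p \<and> p \<le> i) \<longrightarrow> lam s i p = 0) \<and>
     (\<forall>s\<in>{1..l}. \<forall>p\<in>{1..N}. lam s N p = (if p \<le> pp s then 1 else 0)) \<and>
     (\<forall>s\<in>{1..l}. \<forall>i\<in>{2..N}. \<forall>p\<in>{1..i-1}.
        lam s i p \<ge> lam s (i-1) p \<and> lam s (i-1) p \<ge> lam s i (p+1))}"

definition shift :: "pattern \<Rightarrow> nat \<Rightarrow> nat \<Rightarrow> nat \<Rightarrow> int \<Rightarrow> pattern" where
  "shift lam s i p c = (\<lambda>s' i' p'. if (s', i', p') = (s, i, p) then lam s' i' p' + c else lam s' i' p')"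

definition Rset :: "nat \<Rightarrow> nat \<Rightarrow> (nat \<Rightarrow> nat) \<Rightarrow> pattern \<Rightarrow> nat \<Rightarrow> (nat \<times> nat) set" where
  "Rset N l pp lam i = {(s, p). shift lam s i p 1 \<in> GT N l pp}"

definition Aset :: "nat \<Rightarrow> nat \<Rightarrow> (nat \<Rightarrow> nat) \<Rightarrow> pattern \<Rightarrow> nat \<Rightarrow> (nat \<times> nat) set" where
  "Aset N l pp lam i = {(s, p). shift lam s i p (-1) \<in> GT N l pp}"

definition lcnt :: "pattern \<Rightarrow> nat \<Rightarrow> nat \<Rightarrow> nat" where
  "lcnt lam s i = card {p \<in> {1..i}. lam s i p = 1}"

definition nu :: "nat \<Rightarrow> (nat \<Rightarrow> nat) \<Rightarrow> (nat \<Rightarrow> int) \<Rightarrow> pattern \<Rightarrow> nat \<Rightarrow> nat \<Rightarrow> nat \<Rightarrow> ratfun" where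
  "nu N pp r lam s i p = hb * of_int (int p - 1 - lam s i p) - aa N pp r s"

definition Lp :: "nat \<Rightarrow> (nat \<Rightarrow> nat) \<Rightarrow> (nat \<Rightarrow> int) \<Rightarrow> pattern \<Rightarrow> nat \<Rightarrow> nat \<Rightarrow> nat \<Rightarrow> nat \<Rightarrow> nat \<Rightarrow> ratfun" where
  "Lp N pp r lam s i p s' p' =
     hb * of_int (int p - int p' + lam s' (i+1) p') - (aa N pp r s - aa N pp r s')"

definition Lm :: "nat \<Rightarrow> (nat \<Rightarrow> nat) \<Rightarrow> (nat \<Rightarrow> int) \<Rightarrow> pattern \<Rightarrow> nat \<Rightarrow> nat \<Rightarrow> nat \<Rightarrow> nat \<Rightarrow> nat \<Rightarrow> ratfun" where
  "Lm N pp r lam s i p s' p' =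
     hb * of_int (int p - int p' - 1 + lam s' (i-1) p') - (aa N pp r s - aa N pp r s')"

end

theory Submission
  imports Defs
begin

lemma of_int_fract': "(of_int x :: 'a::idom fract) = Fract (of_int x) 1"
proof (cases x rule: int_cases)
  case (nonneg n) then show ?thesis by (simp add: of_nat_fract)
next
  case (neg n) then show ?thesis by (simp add: of_nat_fract One_fract_def)
qed

lemma eps_indep: "of_int x * eps1 + of_int y * eps2 = 0 \<Longrightarrow> x = 0 \<and> y = 0"
proof -
  assume h: "of_int x * eps1 + of_int y * eps2 = 0"
  have "of_int x * eps1 + of_int y * eps2 = Fract (of_int x * [:[:0,1:]:] + of_int y * [:0,1:]) 1"
    by (simp add: eps1_def eps2_def of_int_fract')
  with h have "(of_int x * [:[:0,1:]:] + of_int y * [:0,1:] :: complex poly poly) = 0"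
    by (simp add: Zero_fract_def eq_fract)
  then have c0: "coeff (coeff (of_int x * [:[:0,1:]:] + of_int y * [:0,1:] :: complex poly poly) 0) 1 = 0"
    and c1: "coeff (coeff (of_int x * [:[:0,1:]:] + of_int y * [:0,1:] :: complex poly poly) 1) 0 = 0" by simp_all
  from c0 have "x = 0" by (simp add: of_int_poly)
  moreover from c1 have "y = 0" by (simp add: of_int_poly)
  ultimately show ?thesis by simp
qed


definition hh :: "int \<Rightarrow> nat \<Rightarrow> nat \<Rightarrow> int" where
  "hh c m p' = c - int p' + (if p' \<le> m then 1 else 0)"

lemma inj_hh: "inj_on (hh c m) A"
  unfolding inj_on_def hh_def by (auto split: if_splits)

lemma img_hh: "m \<le> n \<Longrightarrow> hh c m ` {1..n} = {c - int n..c} - {c - int m}"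
proof
  assume "m \<le> n"
  show "hh c m ` {1..n} \<subseteq> {c - int n..c} - {c - int m}"
    unfolding hh_def by (auto split: if_splits)
  show "{c - int n..c} - {c - int m} \<subseteq> hh c m ` {1..n}"
  proof
    fix k assume k: "k \<in> {c - int n..c} - {c - int m}"
    show "k \<in> hh c m ` {1..n}"
    proof (cases "k > c - int m")
      case True
      then have "k = hh c m (nat (c - k + 1))" "nat (c - k + 1) \<in> {1..n}"
        using k \<open>m \<le> n\<close> unfolding hh_def by auto
      then show ?thesis by blast
    next
      case False
      then have "k = hh c m (nat (c - k))" "nat (c - k) \<in> {1..n}"
        using k \<open>m \<le> n\<close> unfolding hh_def by auto
      then show ?thesis by blast
    qed
  qed
qed

lemma prod_row:
  "m \<le> n \<Longrightarrow> (\<Prod>p'\<in>{1..n}. g (hh c m p')) = (\<Prod>k\<in>{c - int n..c} - {c - int m}. g k)"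
  by (metis img_hh inj_hh prod.reindex_cong)

lemma prod_row_minus:
  "m \<le> n \<Longrightarrow> q \<in> {1..n} \<Longrightarrow> (\<Prod>p'\<in>{1..n} - {q}. g (hh c m p')) = (\<Prod>k\<in>{c - int n..c} - {c - int m} - {hh c m q}. g k)"
proof -
  assume "m \<le> n" "q \<in> {1..n}"
  have "hh c m ` ({1..n} - {q}) = hh c m ` {1..n} - hh c m ` {q}"
    by (rule inj_on_image_set_diff[OF inj_hh]) (use \<open>q \<in> {1..n}\<close> in auto)
  then have "hh c m ` ({1..n} - {q}) = {c - int n..c} - {c - int m} - {hh c m q}"
    using img_hh[OF \<open>m \<le> n\<close>] by simp
  then show ?thesis by (metis inj_hh prod.reindex_cong)
qed

lemma ratio_other_plus:
  fixes F :: "int \<Rightarrow> 'a::field"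
  assumes nz: "\<And>k. F k \<noteq> 0" and "m \<le> i" "m' \<le> i+1"
  shows "(\<Prod>p'\<in>{1..i+1}. F (hh c m' p')) / (\<Prod>p'\<in>{1..i}. F (hh c m p'))
     = F (c - int i - 1) * F (c - int m) / F (c - int m')"
proof -
  let ?W = "\<Prod>k\<in>{c - int i..c}. F k"
  have W: "?W \<noteq> 0" using nz by (simp add: prod_zero_iff)
  have N: "(\<Prod>p'\<in>{1..i+1}. F (hh c m' p')) * F (c - int m') = F (c - int i - 1) * ?W"
  proof -
    have "(\<Prod>p'\<in>{1..i+1}. F (hh c m' p')) * F (c - int m') = (\<Prod>k\<in>{c - int (i+1)..c}. F k)"
      using prod_row[OF assms(3), of F c] prod.remove[of "{c - int (i+1)..c}" "c - int m'" F] assms(3)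
      by (simp add: mult.commute)
    also have "\<dots> = F (c - int i - 1) * ?W"
    proof -
      have e: "{c - int (i+1)..c} - {c - int i - 1} = {c - int i..c}" by auto
      show ?thesis using prod.remove[of "{c - int (i+1)..c}" "c - int i - 1" F] e by simp
    qed
    finally show ?thesis .
  qed
  have D: "(\<Prod>p'\<in>{1..i}. F (hh c m p')) * F (c - int m) = ?W"
    using prod_row[OF assms(2), of F c] prod.remove[of "{c - int i..c}" "c - int m" F] assms(2)
    by (simp add: mult.commute)
  show ?thesis using N D W nz
    by (simp add: field_simps)
qed

lemma ratio_other_minus:
  fixes F :: "int \<Rightarrow> 'a::field"
  assumes nz: "\<And>k. F k \<noteq> 0" and "1 \<le> i" "m \<le> i" "mm \<le> i - 1"
  shows "(\<Prod>p'\<in>{1..i-1}. F (hh c mm p')) / (\<Prod>p'\<in>{1..i}. F (hh c m p'))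
     = F (c - int m) / (F (c - int i) * F (c - int mm))"
proof -
  let ?V = "\<Prod>k\<in>{c - int i + 1..c}. F k"
  have V: "?V \<noteq> 0" using nz by (simp add: prod_zero_iff)
  have N: "(\<Prod>p'\<in>{1..i-1}. F (hh c mm p')) * F (c - int mm) = ?V"
  proof -
    have e: "{c - int (i - 1)..c} = {c - int i + 1..c}" using assms(2) by (simp add: of_nat_diff)
    have "(\<Prod>p'\<in>{1..i-1}. F (hh c mm p')) = prod F ({c - int i + 1..c} - {c - int mm})"
      using prod_row[OF assms(4), of F c] e by (simp only:)
    moreover have "c - int mm \<in> {c - int i + 1..c}" using assms(2,4) by auto
    ultimately show ?thesis
      using prod.remove[of "{c - int i + 1..c}" "c - int mm" F]
      by (simp add: mult.commute)
  qed
  have D: "(\<Prod>p'\<in>{1..i}. F (hh c m p')) * F (c - int m) = F (c - int i) * ?V"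
  proof -
    have "(\<Prod>p'\<in>{1..i}. F (hh c m p')) * F (c - int m) = (\<Prod>k\<in>{c - int i..c}. F k)"
      using prod_row[OF assms(3), of F c] prod.remove[of "{c - int i..c}" "c - int m" F] assms(3)
      by (simp add: mult.commute)
    also have "\<dots> = F (c - int i) * ?V"
    proof -
      have e: "{c - int i..c} - {c - int i} = {c - int i + 1..c}" by auto
      show ?thesis using prod.remove[of "{c - int i..c}" "c - int i" F] e assms(2) by simp
    qed
    finally show ?thesis .
  qed
  show ?thesis using N D V nz
    by (simp add: field_simps)
qed

lemma ratio_own_plus:
  fixes F :: "int \<Rightarrow> 'a::field"
  assumes nz: "\<And>k. k \<noteq> 0 \<Longrightarrow> F k \<noteq> 0" and "1 \<le> p" "p \<le> i"
  shows "(\<Prod>p'\<in>{1..i+1}. F (hh (int p) p p')) / (\<Prod>p'\<in>{1..i} - {p}. F (hh (int p) (p - 1) p'))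
     = F (int p - int i - 1) * F 1"
proof -
  let ?T = "{int p - int i..int p} - {1} - {0}"
  have T: "(\<Prod>k\<in>?T. F k) \<noteq> 0" using nz by (simp add: prod_zero_iff)
  have N: "(\<Prod>p'\<in>{1..i+1}. F (hh (int p) p p')) = F (int p - int i - 1) * (F 1 * (\<Prod>k\<in>?T. F k))"
  proof -
    have e: "{int p - int (i+1)..int p} - {int p - int p} = insert (int p - int i - 1) (insert 1 ?T)"
      using assms by auto
    have "(\<Prod>p'\<in>{1..i+1}. F (hh (int p) p p')) = (\<Prod>k\<in>insert (int p - int i - 1) (insert 1 ?T). F k)"
      using prod_row[of p "i+1" F "int p"] assms e by simp
    also have "\<dots> = F (int p - int i - 1) * (F 1 * (\<Prod>k\<in>?T. F k))"
      using assms by (subst prod.insert) auto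
    finally show ?thesis .
  qed
  have D: "(\<Prod>p'\<in>{1..i} - {p}. F (hh (int p) (p - 1) p')) = (\<Prod>k\<in>?T. F k)"
  proof -
    have e: "{int p - int i..int p} - {int p - int (p - 1)} - {hh (int p) (p - 1) p} = ?T"
      using assms by (auto simp: hh_def)
    show ?thesis using prod_row_minus[of "p - 1" i p F "int p"] assms e by simp
  qed
  show ?thesis using N D T by simp
qed

lemma ratio_own_minus:
  fixes F :: "int \<Rightarrow> 'a::field"
  assumes nz: "\<And>k. k \<noteq> 0 \<Longrightarrow> F k \<noteq> 0" and "1 \<le> p" "p \<le> i"
  shows "(\<Prod>p'\<in>{1..i-1}. F (hh (int p - 1) (p - 1) p')) / (\<Prod>p'\<in>{1..i} - {p}. F (hh (int p - 1) p p'))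
     = F (-1) / F (int p - 1 - int i)"
proof -
  let ?U = "{int p - 1 - int i..int p - 1} - {0}"
  let ?A = "{int p - int i..int p - 1} - {0}"
  let ?B = "{int p - 1 - int i..int p - 1} - {-1} - {0}"
  have B: "(\<Prod>k\<in>?B. F k) \<noteq> 0" using nz by (simp add: prod_zero_iff)
  have N: "(\<Prod>p'\<in>{1..i-1}. F (hh (int p - 1) (p - 1) p')) = (\<Prod>k\<in>?A. F k)"
  proof -
    have e: "{int p - 1 - int (i - 1)..int p - 1} - {int p - 1 - int (p - 1)} = ?A"
      using assms by auto
    show ?thesis using prod_row[of "p - 1" "i - 1" F "int p - 1"] assms e by simp
  qed
  have D: "(\<Prod>p'\<in>{1..i} - {p}. F (hh (int p - 1) p p')) = (\<Prod>k\<in>?B. F k)"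
  proof -
    have e: "{int p - 1 - int i..int p - 1} - {int p - 1 - int p} - {hh (int p - 1) p p} = ?B"
      using assms by (auto simp: hh_def)
    show ?thesis using prod_row_minus[of p i p F "int p - 1"] assms e by simp
  qed
  have U1: "(\<Prod>k\<in>?U. F k) = F (int p - 1 - int i) * (\<Prod>k\<in>?A. F k)"
  proof -
    have e: "?U = insert (int p - 1 - int i) ?A" using assms by auto
    show ?thesis unfolding e by (subst prod.insert) auto
  qed
  have U2: "(\<Prod>k\<in>?U. F k) = F (-1) * (\<Prod>k\<in>?B. F k)"
  proof -
    have e: "?U = insert (-1) ?B" using assms by auto
    show ?thesis unfolding e by (subst prod.insert) auto
  qed
  have F1: "F (int p - 1 - int i) \<noteq> 0" using nz assms by simp
  show ?thesis using N D U1 U2 B F1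
    by (simp add: field_simps)
qed



lemma GT_out: "lam \<in> GT N l pp \<Longrightarrow> \<not> (1 \<le> s \<and> s \<le> l \<and> 1 \<le> i \<and> i \<le> N \<and> 1 \<le> p \<and> p \<le> i) \<Longrightarrow> lam s i p = 0"
  unfolding GT_def by blast

lemma GT_top: "lam \<in> GT N l pp \<Longrightarrow> s \<in> {1..l} \<Longrightarrow> p \<in> {1..N} \<Longrightarrow> lam s N p = (if p \<le> pp s then 1 else 0)"
  unfolding GT_def by blast

lemma GT_il: "lam \<in> GT N l pp \<Longrightarrow> s \<in> {1..l} \<Longrightarrow> i \<in> {2..N} \<Longrightarrow> p \<in> {1..i-1} \<Longrightarrow>
   lam s i p \<ge> lam s (i-1) p \<and> lam s (i-1) p \<ge> lam s i (p+1)"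
  unfolding GT_def by blast

lemma GT_mono:
  assumes G: "lam \<in> GT N l pp" and s: "s \<in> {1..l}" and j: "1 \<le> j" "j \<le> N"
  shows "(\<forall>p\<in>{1..j}. lam s j p = 0 \<or> lam s j p = 1) \<and> (\<forall>p q. 1 \<le> p \<longrightarrow> p \<le> q \<longrightarrow> q \<le> j \<longrightarrow> lam s j q \<le> lam s j p)"
  using j(2)
proof (induction j rule: inc_induct)
  case base
  show ?case using GT_top[OF G s] by auto
next
  case (step n)
  from step.IH have B: "\<forall>p\<in>{1..Suc n}. lam s (Suc n) p = 0 \<or> lam s (Suc n) p = 1"
    and M: "\<And>p q. 1 \<le> p \<Longrightarrow> p \<le> q \<Longrightarrow> q \<le> Suc n \<Longrightarrow> lam s (Suc n) q \<le> lam s (Suc n) p" by auto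
  have I: "\<And>p. p \<in> {1..n} \<Longrightarrow> lam s (Suc n) p \<ge> lam s n p \<and> lam s n p \<ge> lam s (Suc n) (p+1)"
    using GT_il[OF G s, of "Suc n"] step.hyps by auto
  show ?case
  proof
    show "\<forall>p\<in>{1..n}. lam s n p = 0 \<or> lam s n p = 1"
    proof
      fix p assume p: "p \<in> {1..n}"
      have "lam s (Suc n) p = 0 \<or> lam s (Suc n) p = 1" "lam s (Suc n) (p+1) = 0 \<or> lam s (Suc n) (p+1) = 1"
        using B p by auto
      with I[OF p] show "lam s n p = 0 \<or> lam s n p = 1" by auto
    qed
    show "\<forall>p q. 1 \<le> p \<longrightarrow> p \<le> q \<longrightarrow> q \<le> n \<longrightarrow> lam s n q \<le> lam s n p"
    proof (intro allI impI)
      fix p q assume h: "1 \<le> p" "p \<le> q" "q \<le> n"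
      show "lam s n q \<le> lam s n p"
      proof (cases "p = q")
        case False
        have "lam s n q \<le> lam s (Suc n) q" using I[of q] h by auto
        also have "\<dots> \<le> lam s (Suc n) (p+1)" using M[of "p+1" q] h False by auto
        also have "\<dots> \<le> lam s n p" using I[of p] h by auto
        finally show ?thesis .
      qed simp
    qed
  qed
qed

lemma lcnt_le: "lcnt lam s j \<le> j"
proof -
  have "card {p \<in> {1..j}. lam s j p = 1} \<le> card {1..j}" by (rule card_mono) auto
  then show ?thesis unfolding lcnt_def by simp
qed

lemma GT_row:
  assumes G: "lam \<in> GT N l pp" and s: "s \<in> {1..l}" and j: "j \<le> N" and p: "1 \<le> p"
  shows "lam s j p = (if p \<le> lcnt lam s j then 1 else 0)"
proof -
  let ?S = "{p \<in> {1..j}. lam s j p = 1}"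
  have le: "lcnt lam s j \<le> j" by (rule lcnt_le)
  show ?thesis
  proof (cases "p \<le> j")
    case False
    then have "lam s j p = 0" using GT_out[OF G] by auto
    then show ?thesis using False le by auto
  next
    case True
    then have j1: "1 \<le> j" using p by simp
    note GM = GT_mono[OF G s j1 j]
    show ?thesis
    proof (cases "lam s j p = 1")
      case True
      have "{1..p} \<subseteq> ?S"
      proof
        fix q assume q: "q \<in> {1..p}"
        have "lam s j p \<le> lam s j q" using GM q \<open>p \<le> j\<close> by auto
        moreover have "lam s j q = 0 \<or> lam s j q = 1" using GM q \<open>p \<le> j\<close> by auto
        ultimately show "q \<in> ?S" using q True \<open>p \<le> j\<close> by auto
      qed
      then have "p \<le> lcnt lam s j" unfolding lcnt_def using card_mono[of ?S "{1..p}"] by auto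
      then show ?thesis using True by simp
    next
      case False
      then have z: "lam s j p = 0" using GM \<open>p \<le> j\<close> p by auto
      have "?S \<subseteq> {1..p-1}"
      proof
        fix q assume q: "q \<in> ?S"
        show "q \<in> {1..p-1}"
        proof (rule ccontr)
          assume "q \<notin> {1..p-1}"
          then have "p \<le> q" using q by auto
          moreover have "q \<le> j" using q by simp
          ultimately have "lam s j q \<le> lam s j p" using GM p by blast
          then show False using q z by auto
        qed
      qed
      then have "lcnt lam s j \<le> p - 1" unfolding lcnt_def using card_mono[of "{1..p-1}" ?S] by auto
      then show ?thesis using z p by auto
    qed
  qed
qed


lemma GT_interlace:
  assumes G: "lam \<in> GT N l pp" and s: "s \<in> {1..l}" and j: "Suc j \<le> N"
  shows "lcnt lam s j \<le> lcnt lam s (Suc j) \<and> lcnt lam s (Suc j) \<le> lcnt lam s j + 1"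
proof (cases "j = 0")
  case True
  then show ?thesis using lcnt_le[of lam s "Suc j"] lcnt_le[of lam s j] by simp
next
  case False
  let ?m = "lcnt lam s j" and ?m' = "lcnt lam s (Suc j)"
  have R: "\<And>jj q. jj \<le> N \<Longrightarrow> 1 \<le> q \<Longrightarrow> lam s jj q = (if q \<le> lcnt lam s jj then 1 else 0)"
    using GT_row[OF G s] by blast
  have I: "\<And>p. p \<in> {1..j} \<Longrightarrow> lam s (Suc j) p \<ge> lam s j p \<and> lam s j p \<ge> lam s (Suc j) (p+1)"
    using GT_il[OF G s, of "Suc j"] j False by auto
  have A: "?m \<le> ?m'"
  proof (cases "?m = 0")
    case False
    have "?m \<in> {1..j}" using False lcnt_le[of lam s j] by auto
    from I[OF this] R[of j ?m] R[of "Suc j" ?m] j False show ?thesis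
      by (auto split: if_splits)
  qed simp
  have B: "?m' \<le> ?m + 1"
  proof (rule ccontr)
    assume "\<not> ?m' \<le> ?m + 1"
    then have h: "?m + 2 \<le> ?m'" by simp
    have "?m + 1 \<in> {1..j}" using h lcnt_le[of lam s "Suc j"] by auto
    from I[OF this] R[of j "?m+1"] R[of "Suc j" "?m+2"] j h show False
      by (auto split: if_splits)
  qed
  show ?thesis using A B by simp
qed



lemma hb_int_nz: "k \<noteq> 0 \<Longrightarrow> hb * of_int k \<noteq> 0"
proof
  assume k: "k \<noteq> 0" and h: "hb * of_int k = 0"
  have "hb * of_int k = of_int (-k) * eps1 + of_int (-k) * eps2"
    by (simp add: hb_def algebra_simps)
  with h eps_indep[of "-k" "-k"] k show False by simp
qed

lemma hb_nz: "hb \<noteq> 0"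
  using hb_int_nz[of 1] by simp

lemma F_other_nz:
  assumes N: "N \<ge> 2" and d: "r s \<noteq> r s'"
  shows "hb * of_int k - (aa N pp r s - aa N pp r s') \<noteq> 0"
proof
  assume h: "hb * of_int k - (aa N pp r s - aa N pp r s') = 0"
  define \<sigma> where "\<sigma> = int (\<Sum>j = 1..s. pp j) - int (\<Sum>j = 1..s'. pp j)"
  have E: "hb * of_int k - (aa N pp r s - aa N pp r s')
     = of_int (-(k - \<sigma>)) * eps1 + of_int (-(k - \<sigma>) - int N * (r s - r s')) * eps2"
    unfolding \<sigma>_def aa_def tt_def hb_def by (simp add: algebra_simps)
  from h E have "of_int (-(k - \<sigma>)) * eps1 + of_int (-(k - \<sigma>) - int N * (r s - r s')) * eps2 = 0"
    by simp
  from eps_indep[OF this] have "int N * (r s - r s') = 0" by auto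
  with N d show False by simp
qed

lemma nu_diff: "nu N pp r lam s i p - nu N pp r lam s' i p' =
   hb * of_int ((int p - 1 - lam s i p) - (int p' - 1 - lam s' i p')) - (aa N pp r s - aa N pp r s')"
  unfolding nu_def by (simp add: algebra_simps)



theorem lemma3p2:
  fixes N l i :: nat and pp :: "nat \<Rightarrow> nat" and r :: "nat \<Rightarrow> int" and lam :: pattern
  assumes "N \<ge> 2" and "l \<ge> 1"
    and "\<forall>s\<in>{1..l}. 1 \<le> pp s \<and> pp s \<le> N"
    and "\<forall>s\<in>{1..l}. \<forall>s'\<in>{1..l}. s < s' \<longrightarrow> r s < r s'"
    and "lam \<in> GT N l pp"
    and "1 \<le> i" and "i \<le> N - 1"
  shows
   "(\<forall>(s, p) \<in> Rset N l pp lam i.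
      (\<Prod>p'\<in>{1..i+1}. Lp N pp r lam s i p s p')
        / (\<Prod>p'\<in>{1..i} - {p}. nu N pp r lam s i p - nu N pp r lam s i p')
        = hb ^ 2 * of_int (int p - int i - 1)
      \<and> (\<forall>s'\<in>{1..l}. s' \<noteq> s \<longrightarrow>
          (let D = aa N pp r s - aa N pp r s';
               Q = (\<Prod>p'\<in>{1..i+1}. Lp N pp r lam s i p s' p')
                   / (\<Prod>p'\<in>{1..i}. nu N pp r lam s i p - nu N pp r lam s' i p');
               li = lcnt lam s' i; li1 = lcnt lam s' (i+1)
           in (li1 = li \<longrightarrow> Q = hb * of_int (int p - int i - 1) - D)
            \<and> (li1 = li + 1 \<and> li = i \<longrightarrow> Q = hb * of_int (int p - int i) - D)
            \<and> (li1 = li + 1 \<and> li \<noteq> i \<longrightarrow>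
                 Q = (hb * of_int (int p - int li) - D) * (hb * of_int (int p - int i - 1) - D)
                     / (hb * of_int (int p - int li - 1) - D)))))
    \<and> (\<forall>(s, p) \<in> Aset N l pp lam i.
      (\<Prod>p'\<in>{1..i-1}. Lm N pp r lam s i p s p')
        / (\<Prod>p'\<in>{1..i} - {p}. nu N pp r lam s i p - nu N pp r lam s i p')
        = - (1 / of_int (int p - int i - 1))
      \<and> (\<forall>s'\<in>{1..l}. s' \<noteq> s \<longrightarrow>
          (let D = aa N pp r s - aa N pp r s';
               Q = (\<Prod>p'\<in>{1..i-1}. Lm N pp r lam s i p s' p')
                   / (\<Prod>p'\<in>{1..i}. nu N pp r lam s i p - nu N pp r lam s' i p');
               li = lcnt lam s' i; lim = lcnt lam s' (i-1)
           in (lim = li \<longrightarrow> Q = 1 / (hb * of_int (int p - int i - 1) - D))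
            \<and> (lim + 1 = li \<and> li = i \<longrightarrow> Q = 1 / (hb * of_int (int p - int i) - D))
            \<and> (lim + 1 = li \<and> li \<noteq> i \<longrightarrow>
                 Q = (hb * of_int (int p - int li - 1) - D)
                     / ((hb * of_int (int p - int li) - D) * (hb * of_int (int p - int i - 1) - D))))))"
proof -
  note G = assms(5)
  have rdiff: "\<And>s s'. s \<in> {1..l} \<Longrightarrow> s' \<in> {1..l} \<Longrightarrow> s' \<noteq> s \<Longrightarrow> r s \<noteq> r s'"
  proof -
    fix s s' assume "s \<in> {1..l}" "s' \<in> {1..l}" "s' \<noteq> s"
    then have "r s < r s' \<or> r s' < r s" using assms(4) by (metis linorder_neqE_nat)
    then show "r s \<noteq> r s'" by auto
  qed
  have row: "\<And>s j q. s \<in> {1..l} \<Longrightarrow> j \<le> N \<Longrightarrow> 1 \<le> q \<Longrightarrow> lam s j q = (if q \<le> lcnt lam s j then 1 else 0)"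
    using GT_row[OF G] by blast
  have iN: "i + 1 \<le> N" using assms(6,7) by simp
  show ?thesis
  proof (intro conjI)
    have R: "(\<Prod>p'\<in>{1..i+1}. Lp N pp r lam s i p s p')
        / (\<Prod>p'\<in>{1..i} - {p}. nu N pp r lam s i p - nu N pp r lam s i p')
        = hb ^ 2 * of_int (int p - int i - 1)
      \<and> (\<forall>s'\<in>{1..l}. s' \<noteq> s \<longrightarrow>
          (let D = aa N pp r s - aa N pp r s';
               Q = (\<Prod>p'\<in>{1..i+1}. Lp N pp r lam s i p s' p')
                   / (\<Prod>p'\<in>{1..i}. nu N pp r lam s i p - nu N pp r lam s' i p');
               li = lcnt lam s' i; li1 = lcnt lam s' (i+1)
           in (li1 = li \<longrightarrow> Q = hb * of_int (int p - int i - 1) - D)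
            \<and> (li1 = li + 1 \<and> li = i \<longrightarrow> Q = hb * of_int (int p - int i) - D)
            \<and> (li1 = li + 1 \<and> li \<noteq> i \<longrightarrow>
                 Q = (hb * of_int (int p - int li) - D) * (hb * of_int (int p - int i - 1) - D)
                     / (hb * of_int (int p - int li - 1) - D))))"
      if x: "(s, p) \<in> Rset N l pp lam i" for s p
    proof -
      let ?lam' = "shift lam s i p 1"
      have G': "?lam' \<in> GT N l pp" using x unfolding Rset_def by simp
      have sp: "s \<in> {1..l}" "p \<in> {1..i}"
      proof -
        have "1 \<le> s \<and> s \<le> l \<and> 1 \<le> i \<and> i \<le> N \<and> 1 \<le> p \<and> p \<le> i"
        proof (rule ccontr)
          assume c: "\<not> ?thesis"
          have "lam s i p = 0" using GT_out[OF G c] .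
          moreover have "?lam' s i p = 0" using GT_out[OF G' c] .
          ultimately show False unfolding shift_def by simp
        qed
        then show "s \<in> {1..l}" "p \<in> {1..i}" by auto
      qed
      define m where "m = lcnt lam s i"
      have iN': "i \<le> N" using iN by simp
      have l1: "lam s i p = (if p \<le> m then 1 else 0)" using row[OF sp(1) iN'] sp(2) m_def by auto
      have l2: "?lam' s i p = (if p \<le> lcnt ?lam' s i then 1 else 0)"
        using GT_row[OF G' sp(1) iN'] sp(2) by auto
      have lp0: "lam s i p = 0" and pm: "m < p"
        using l1 l2 unfolding shift_def by (auto split: if_splits)
      have pm2: "p \<le> m + 1"
      proof (cases "p \<ge> 2")
        case True
        have "p \<le> lcnt ?lam' s i" using l2 lp0 unfolding shift_def by (auto split: if_splits)
        then have "?lam' s i (p - 1) = 1" using GT_row[OF G' sp(1) iN', of "p-1"] True by auto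
        then have "lam s i (p - 1) = 1" using True unfolding shift_def by (auto split: if_splits)
        moreover have "1 \<le> p - 1" using True by simp
        ultimately show ?thesis using row[OF sp(1) iN', of "p - 1"] m_def by (auto split: if_splits)
      qed (use pm in auto)
      have pmeq: "p = m + 1" using pm pm2 by simp
      define m1 where "m1 = lcnt lam s (i+1)"
      have m1p: "m1 = p"
      proof -
        have "?lam' s (i+1) p \<ge> ?lam' s i p" using GT_il[OF G' sp(1), of "i+1" p] sp(2) iN assms(6) by auto
        then have "lam s (i+1) p \<ge> 1" using lp0 unfolding shift_def by auto
        then have "p \<le> m1" using row[OF sp(1) iN, of p] sp(2) m1_def by (auto split: if_splits)
        moreover have "m1 \<le> m + 1" using GT_interlace[OF G sp(1), of i] iN m_def m1_def by simp
        ultimately show ?thesis using pmeq by simp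
      qed
      have own: "(\<Prod>p'\<in>{1..i+1}. Lp N pp r lam s i p s p')
          / (\<Prod>p'\<in>{1..i} - {p}. nu N pp r lam s i p - nu N pp r lam s i p')
          = hb ^ 2 * of_int (int p - int i - 1)"
      proof -
        define F where "F = (\<lambda>k::int. hb * of_int k)"
        have Fnz: "\<And>k. k \<noteq> 0 \<Longrightarrow> F k \<noteq> 0" unfolding F_def by (rule hb_int_nz)
        have n: "(\<Prod>p'\<in>{1..i+1}. Lp N pp r lam s i p s p') = (\<Prod>p'\<in>{1..i+1}. F (hh (int p) p p'))"
        proof (rule prod.cong)
          fix p' assume p': "p' \<in> {1..i+1}"
          have "lam s (i+1) p' = (if p' \<le> p then 1 else 0)" using row[OF sp(1) iN, of p'] p' m1_def m1p by auto
          then show "Lp N pp r lam s i p s p' = F (hh (int p) p p')"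
            unfolding Lp_def F_def hh_def by simp
        qed simp
        have d: "(\<Prod>p'\<in>{1..i} - {p}. nu N pp r lam s i p - nu N pp r lam s i p') = (\<Prod>p'\<in>{1..i} - {p}. F (hh (int p) (p - 1) p'))"
        proof (rule prod.cong)
          fix p' assume p': "p' \<in> {1..i} - {p}"
          have "lam s i p' = (if p' \<le> p - 1 then 1 else 0)" using row[OF sp(1) iN', of p'] p' m_def pmeq by auto
          then show "nu N pp r lam s i p - nu N pp r lam s i p' = F (hh (int p) (p - 1) p')"
            unfolding nu_diff F_def hh_def using lp0 by simp
        qed simp
        have "(\<Prod>p'\<in>{1..i+1}. F (hh (int p) p p')) / (\<Prod>p'\<in>{1..i} - {p}. F (hh (int p) (p - 1) p'))
          = F (int p - int i - 1) * F 1"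
          using ratio_own_plus[where F=F and p=p and i=i, OF Fnz] sp(2) by auto
        then show ?thesis unfolding n d F_def by (simp add: power2_eq_square algebra_simps)
      qed
      have other: "\<forall>s'\<in>{1..l}. s' \<noteq> s \<longrightarrow>
          (let D = aa N pp r s - aa N pp r s';
               Q = (\<Prod>p'\<in>{1..i+1}. Lp N pp r lam s i p s' p')
                   / (\<Prod>p'\<in>{1..i}. nu N pp r lam s i p - nu N pp r lam s' i p');
               li = lcnt lam s' i; li1 = lcnt lam s' (i+1)
           in (li1 = li \<longrightarrow> Q = hb * of_int (int p - int i - 1) - D)
            \<and> (li1 = li + 1 \<and> li = i \<longrightarrow> Q = hb * of_int (int p - int i) - D)
            \<and> (li1 = li + 1 \<and> li \<noteq> i \<longrightarrow>
                 Q = (hb * of_int (int p - int li) - D) * (hb * of_int (int p - int i - 1) - D)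
                     / (hb * of_int (int p - int li - 1) - D)))"
      proof (intro ballI impI)
        fix s' assume s': "s' \<in> {1..l}" "s' \<noteq> s"
        define D where "D = aa N pp r s - aa N pp r s'"
        define F where "F = (\<lambda>k::int. hb * of_int k - D)"
        have Fnz: "\<And>k. F k \<noteq> 0" unfolding F_def D_def
          by (rule F_other_nz[OF assms(1) rdiff[OF sp(1) s'(1) s'(2)]])
        define n where "n = lcnt lam s' i"
        define n1 where "n1 = lcnt lam s' (i+1)"
        have nn: "n \<le> i" "n1 \<le> i + 1" using lcnt_le n_def n1_def by auto
        have nn1: "n \<le> n1 \<and> n1 \<le> n + 1" using GT_interlace[OF G s'(1), of i] iN n_def n1_def by simp
        have nq: "(\<Prod>p'\<in>{1..i+1}. Lp N pp r lam s i p s' p') = (\<Prod>p'\<in>{1..i+1}. F (hh (int p) n1 p'))"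
        proof (rule prod.cong)
          fix p' assume p': "p' \<in> {1..i+1}"
          have "lam s' (i+1) p' = (if p' \<le> n1 then 1 else 0)" using row[OF s'(1) iN, of p'] p' n1_def by auto
          then show "Lp N pp r lam s i p s' p' = F (hh (int p) n1 p')"
            unfolding Lp_def F_def D_def hh_def by simp
        qed simp
        have dq: "(\<Prod>p'\<in>{1..i}. nu N pp r lam s i p - nu N pp r lam s' i p') = (\<Prod>p'\<in>{1..i}. F (hh (int p) n p'))"
        proof (rule prod.cong)
          fix p' assume p': "p' \<in> {1..i}"
          have "lam s' i p' = (if p' \<le> n then 1 else 0)" using row[OF s'(1) iN', of p'] p' n_def by auto
          then show "nu N pp r lam s i p - nu N pp r lam s' i p' = F (hh (int p) n p')"
            unfolding nu_diff F_def D_def hh_def using lp0 by simp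
        qed simp
        have Q: "(\<Prod>p'\<in>{1..i+1}. Lp N pp r lam s i p s' p')
                   / (\<Prod>p'\<in>{1..i}. nu N pp r lam s i p - nu N pp r lam s' i p')
             = F (int p - int i - 1) * F (int p - int n) / F (int p - int n1)"
          unfolding nq dq by (rule ratio_other_plus[OF Fnz nn])
        have F1: "F (int p - int n) \<noteq> 0" "F (int p - int i - 1) \<noteq> 0" "F (int p - int n - 1) \<noteq> 0" using Fnz by auto
        show "let D = aa N pp r s - aa N pp r s';
               Q = (\<Prod>p'\<in>{1..i+1}. Lp N pp r lam s i p s' p')
                   / (\<Prod>p'\<in>{1..i}. nu N pp r lam s i p - nu N pp r lam s' i p');
               li = lcnt lam s' i; li1 = lcnt lam s' (i+1)
           in (li1 = li \<longrightarrow> Q = hb * of_int (int p - int i - 1) - D)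
            \<and> (li1 = li + 1 \<and> li = i \<longrightarrow> Q = hb * of_int (int p - int i) - D)
            \<and> (li1 = li + 1 \<and> li \<noteq> i \<longrightarrow>
                 Q = (hb * of_int (int p - int li) - D) * (hb * of_int (int p - int i - 1) - D)
                     / (hb * of_int (int p - int li - 1) - D))"
          unfolding Let_def Q n_def[symmetric] n1_def[symmetric] D_def[symmetric]
        proof (intro conjI impI)
          assume "n1 = n" then show "F (int p - int i - 1) * F (int p - int n) / F (int p - int n1) = hb * of_int (int p - int i - 1) - D"
            using F1 unfolding F_def by simp
        next
          assume h: "n1 = n + 1 \<and> n = i"
          then have e: "int p - int n1 = int p - int i - 1" "int p - int n = int p - int i" by auto
          have "F (int p - int i - 1) * F (int p - int n) / F (int p - int n1) = F (int p - int i)"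
            unfolding e using F1(2) by simp
          then show "F (int p - int i - 1) * F (int p - int n) / F (int p - int n1) = hb * of_int (int p - int i) - D"
            unfolding F_def by simp
        next
          assume h: "n1 = n + 1 \<and> n \<noteq> i"
          then show "F (int p - int i - 1) * F (int p - int n) / F (int p - int n1) = (hb * of_int (int p - int n) - D) * (hb * of_int (int p - int i - 1) - D) / (hb * of_int (int p - int n - 1) - D)"
            unfolding F_def by (simp add: algebra_simps)
        qed
      qed
      show ?thesis using own other by (rule conjI)
    qed
    then show "\<forall>(s, p) \<in> Rset N l pp lam i.
      (\<Prod>p'\<in>{1..i+1}. Lp N pp r lam s i p s p')
        / (\<Prod>p'\<in>{1..i} - {p}. nu N pp r lam s i p - nu N pp r lam s i p')
        = hb ^ 2 * of_int (int p - int i - 1)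
      \<and> (\<forall>s'\<in>{1..l}. s' \<noteq> s \<longrightarrow>
          (let D = aa N pp r s - aa N pp r s';
               Q = (\<Prod>p'\<in>{1..i+1}. Lp N pp r lam s i p s' p')
                   / (\<Prod>p'\<in>{1..i}. nu N pp r lam s i p - nu N pp r lam s' i p');
               li = lcnt lam s' i; li1 = lcnt lam s' (i+1)
           in (li1 = li \<longrightarrow> Q = hb * of_int (int p - int i - 1) - D)
            \<and> (li1 = li + 1 \<and> li = i \<longrightarrow> Q = hb * of_int (int p - int i) - D)
            \<and> (li1 = li + 1 \<and> li \<noteq> i \<longrightarrow>
                 Q = (hb * of_int (int p - int li) - D) * (hb * of_int (int p - int i - 1) - D)
                     / (hb * of_int (int p - int li - 1) - D))))" by blast
    have A: "(\<Prod>p'\<in>{1..i-1}. Lm N pp r lam s i p s p')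
        / (\<Prod>p'\<in>{1..i} - {p}. nu N pp r lam s i p - nu N pp r lam s i p')
        = - (1 / of_int (int p - int i - 1))
      \<and> (\<forall>s'\<in>{1..l}. s' \<noteq> s \<longrightarrow>
          (let D = aa N pp r s - aa N pp r s';
               Q = (\<Prod>p'\<in>{1..i-1}. Lm N pp r lam s i p s' p')
                   / (\<Prod>p'\<in>{1..i}. nu N pp r lam s i p - nu N pp r lam s' i p');
               li = lcnt lam s' i; lim = lcnt lam s' (i-1)
           in (lim = li \<longrightarrow> Q = 1 / (hb * of_int (int p - int i - 1) - D))
            \<and> (lim + 1 = li \<and> li = i \<longrightarrow> Q = 1 / (hb * of_int (int p - int i) - D))
            \<and> (lim + 1 = li \<and> li \<noteq> i \<longrightarrow>
                 Q = (hb * of_int (int p - int li - 1) - D)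
                     / ((hb * of_int (int p - int li) - D) * (hb * of_int (int p - int i - 1) - D)))))"
      if x: "(s, p) \<in> Aset N l pp lam i" for s p
    proof -
      let ?lam' = "shift lam s i p (-1)"
      have G': "?lam' \<in> GT N l pp" using x unfolding Aset_def by simp
      have sp: "s \<in> {1..l}" "p \<in> {1..i}"
      proof -
        have "1 \<le> s \<and> s \<le> l \<and> 1 \<le> i \<and> i \<le> N \<and> 1 \<le> p \<and> p \<le> i"
        proof (rule ccontr)
          assume c: "\<not> ?thesis"
          have "lam s i p = 0" using GT_out[OF G c] .
          moreover have "?lam' s i p = 0" using GT_out[OF G' c] .
          ultimately show False unfolding shift_def by simp
        qed
        then show "s \<in> {1..l}" "p \<in> {1..i}" by auto
      qed
      define m where "m = lcnt lam s i"
      have iN': "i \<le> N" using iN by simp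
      have l1: "lam s i p = (if p \<le> m then 1 else 0)" using row[OF sp(1) iN'] sp(2) m_def by auto
      have l2: "?lam' s i p = (if p \<le> lcnt ?lam' s i then 1 else 0)"
        using GT_row[OF G' sp(1) iN'] sp(2) by auto
      have lp1: "lam s i p = 1" and pm: "p \<le> m" and pl: "\<not> p \<le> lcnt ?lam' s i"
        using l1 l2 unfolding shift_def by (auto split: if_splits)
      have pm2: "m \<le> p"
      proof (cases "p + 1 \<le> i")
        case True
        have "?lam' s i (p + 1) = 0" using GT_row[OF G' sp(1) iN', of "p+1"] pl by auto
        then have "lam s i (p + 1) = 0" unfolding shift_def by (auto split: if_splits)
        then show ?thesis using row[OF sp(1) iN', of "p + 1"] m_def by (auto split: if_splits)
      next
        case False
        then show ?thesis using lcnt_le[of lam s i] m_def by simp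
      qed
      have pmeq: "p = m" using pm pm2 by simp
      define mm where "mm = lcnt lam s (i-1)"
      have im: "i - 1 \<le> N" using iN' by simp
      have mmp: "mm = p - 1"
      proof -
        have up: "mm \<le> p - 1"
        proof (cases "p \<le> i - 1")
          case True
          have "?lam' s i p \<ge> ?lam' s (i-1) p" using GT_il[OF G' sp(1), of i p] sp(2) True iN' by auto
          then have "lam s (i-1) p \<le> 0" using lp1 True assms(6) unfolding shift_def by (auto split: if_splits)
          then show ?thesis using row[OF sp(1) im, of p] sp(2) mm_def by (auto split: if_splits)
        next
          case False
          then show ?thesis using lcnt_le[of lam s "i-1"] mm_def sp(2) by simp
        qed
        have "lcnt lam s (Suc (i-1)) \<le> lcnt lam s (i-1) + 1"
          using GT_interlace[OF G sp(1), of "i-1"] iN' assms(6) by simp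
        then have "m \<le> mm + 1" using assms(6) m_def mm_def by simp
        then show ?thesis using up pmeq by simp
      qed
      have own: "(\<Prod>p'\<in>{1..i-1}. Lm N pp r lam s i p s p')
        / (\<Prod>p'\<in>{1..i} - {p}. nu N pp r lam s i p - nu N pp r lam s i p')
        = - (1 / of_int (int p - int i - 1))"
      proof -
        define F where "F = (\<lambda>k::int. hb * of_int k)"
        have Fnz: "\<And>k. k \<noteq> 0 \<Longrightarrow> F k \<noteq> 0" unfolding F_def by (rule hb_int_nz)
        have n: "(\<Prod>p'\<in>{1..i-1}. Lm N pp r lam s i p s p') = (\<Prod>p'\<in>{1..i-1}. F (hh (int p - 1) (p - 1) p'))"
        proof (rule prod.cong)
          fix p' assume p': "p' \<in> {1..i-1}"
          have "lam s (i-1) p' = (if p' \<le> p - 1 then 1 else 0)" using row[OF sp(1) im, of p'] p' mm_def mmp by auto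
          then show "Lm N pp r lam s i p s p' = F (hh (int p - 1) (p - 1) p')"
            unfolding Lm_def F_def hh_def by simp
        qed simp
        have d: "(\<Prod>p'\<in>{1..i} - {p}. nu N pp r lam s i p - nu N pp r lam s i p') = (\<Prod>p'\<in>{1..i} - {p}. F (hh (int p - 1) p p'))"
        proof (rule prod.cong)
          fix p' assume p': "p' \<in> {1..i} - {p}"
          have "lam s i p' = (if p' \<le> p then 1 else 0)" using row[OF sp(1) iN', of p'] p' m_def pmeq by auto
          then show "nu N pp r lam s i p - nu N pp r lam s i p' = F (hh (int p - 1) p p')"
            unfolding nu_diff F_def hh_def using lp1 by simp
        qed simp
        have "(\<Prod>p'\<in>{1..i-1}. F (hh (int p - 1) (p - 1) p')) / (\<Prod>p'\<in>{1..i} - {p}. F (hh (int p - 1) p p'))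
          = F (-1) / F (int p - 1 - int i)"
          using ratio_own_minus[where F=F and p=p and i=i, OF Fnz] sp(2) by auto
        moreover have "F (-1) / F (int p - 1 - int i) = - (1 / of_int (int p - int i - 1))"
        proof -
          have "F (-1) / F (int p - 1 - int i) = - (hb * 1 / (hb * of_int (int p - 1 - int i)))"
            unfolding F_def by simp
          also have "\<dots> = - (1 / of_int (int p - 1 - int i))"
            using hb_nz by (subst mult_divide_mult_cancel_left) auto
          finally have "F (-1) / F (int p - 1 - int i) = - (1 / of_int (int p - 1 - int i))" .
          moreover have "int p - 1 - int i = int p - int i - 1" by simp
          ultimately show ?thesis by (simp only:)
        qed
        ultimately show ?thesis unfolding n d by simp
      qed
      have other: "\<forall>s'\<in>{1..l}. s' \<noteq> s \<longrightarrow>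
          (let D = aa N pp r s - aa N pp r s';
               Q = (\<Prod>p'\<in>{1..i-1}. Lm N pp r lam s i p s' p')
                   / (\<Prod>p'\<in>{1..i}. nu N pp r lam s i p - nu N pp r lam s' i p');
               li = lcnt lam s' i; lim = lcnt lam s' (i-1)
           in (lim = li \<longrightarrow> Q = 1 / (hb * of_int (int p - int i - 1) - D))
            \<and> (lim + 1 = li \<and> li = i \<longrightarrow> Q = 1 / (hb * of_int (int p - int i) - D))
            \<and> (lim + 1 = li \<and> li \<noteq> i \<longrightarrow>
                 Q = (hb * of_int (int p - int li - 1) - D)
                     / ((hb * of_int (int p - int li) - D) * (hb * of_int (int p - int i - 1) - D))))"
      proof (intro ballI impI)
        fix s' assume s': "s' \<in> {1..l}" "s' \<noteq> s"
        define D where "D = aa N pp r s - aa N pp r s'"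
        define F where "F = (\<lambda>k::int. hb * of_int k - D)"
        have Fnz: "\<And>k. F k \<noteq> 0" unfolding F_def D_def
          by (rule F_other_nz[OF assms(1) rdiff[OF sp(1) s'(1) s'(2)]])
        define n where "n = lcnt lam s' i"
        define n1 where "n1 = lcnt lam s' (i-1)"
        have nn: "n \<le> i" "n1 \<le> i - 1" using lcnt_le n_def n1_def by auto
        have nn1: "n1 \<le> n \<and> n \<le> n1 + 1"
          using GT_interlace[OF G s'(1), of "i-1"] iN' assms(6) n_def n1_def by simp
        have nq: "(\<Prod>p'\<in>{1..i-1}. Lm N pp r lam s i p s' p') = (\<Prod>p'\<in>{1..i-1}. F (hh (int p - 1) n1 p'))"
        proof (rule prod.cong)
          fix p' assume p': "p' \<in> {1..i-1}"
          have "lam s' (i-1) p' = (if p' \<le> n1 then 1 else 0)" using row[OF s'(1) im, of p'] p' n1_def by auto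
          then show "Lm N pp r lam s i p s' p' = F (hh (int p - 1) n1 p')"
            unfolding Lm_def F_def D_def hh_def by simp
        qed simp
        have dq: "(\<Prod>p'\<in>{1..i}. nu N pp r lam s i p - nu N pp r lam s' i p') = (\<Prod>p'\<in>{1..i}. F (hh (int p - 1) n p'))"
        proof (rule prod.cong)
          fix p' assume p': "p' \<in> {1..i}"
          have "lam s' i p' = (if p' \<le> n then 1 else 0)" using row[OF s'(1) iN', of p'] p' n_def by auto
          then show "nu N pp r lam s i p - nu N pp r lam s' i p' = F (hh (int p - 1) n p')"
            unfolding nu_diff F_def D_def hh_def using lp1 by simp
        qed simp
        have Q: "(\<Prod>p'\<in>{1..i-1}. Lm N pp r lam s i p s' p')
                   / (\<Prod>p'\<in>{1..i}. nu N pp r lam s i p - nu N pp r lam s' i p')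
             = F (int p - 1 - int n) / (F (int p - 1 - int i) * F (int p - 1 - int n1))"
          unfolding nq dq by (rule ratio_other_minus[OF Fnz assms(6) nn])
        have F1: "\<And>k. F k \<noteq> 0" using Fnz by auto
        show "let D = aa N pp r s - aa N pp r s';
               Q = (\<Prod>p'\<in>{1..i-1}. Lm N pp r lam s i p s' p')
                   / (\<Prod>p'\<in>{1..i}. nu N pp r lam s i p - nu N pp r lam s' i p');
               li = lcnt lam s' i; lim = lcnt lam s' (i-1)
           in (lim = li \<longrightarrow> Q = 1 / (hb * of_int (int p - int i - 1) - D))
            \<and> (lim + 1 = li \<and> li = i \<longrightarrow> Q = 1 / (hb * of_int (int p - int i) - D))
            \<and> (lim + 1 = li \<and> li \<noteq> i \<longrightarrow>
                 Q = (hb * of_int (int p - int li - 1) - D)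
                     / ((hb * of_int (int p - int li) - D) * (hb * of_int (int p - int i - 1) - D)))"
          unfolding Let_def Q n_def[symmetric] n1_def[symmetric] D_def[symmetric]
        proof (intro conjI impI)
          assume h: "n1 = n"
          have e: "int p - 1 - int i = int p - int i - 1" by simp
          have "F (int p - 1 - int n) / (F (int p - 1 - int i) * F (int p - 1 - int n1)) = 1 / F (int p - int i - 1)"
            unfolding h e using F1[of "int p - 1 - int n"] by simp
          then show "F (int p - 1 - int n) / (F (int p - 1 - int i) * F (int p - 1 - int n1)) = 1 / (hb * of_int (int p - int i - 1) - D)"
            unfolding F_def by simp
        next
          assume h: "n1 + 1 = n \<and> n = i"
          then have e: "int p - 1 - int n1 = int p - int i" "int p - 1 - int n = int p - 1 - int i" by auto
          have "F (int p - 1 - int n) / (F (int p - 1 - int i) * F (int p - 1 - int n1)) = 1 / F (int p - int i)"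
            unfolding e using F1[of "int p - 1 - int i"] by simp
          then show "F (int p - 1 - int n) / (F (int p - 1 - int i) * F (int p - 1 - int n1)) = 1 / (hb * of_int (int p - int i) - D)"
            unfolding F_def by simp
        next
          assume h: "n1 + 1 = n \<and> n \<noteq> i"
          then have e: "int p - 1 - int n1 = int p - int n" "int p - 1 - int n = int p - int n - 1"
             "int p - 1 - int i = int p - int i - 1" by auto
          show "F (int p - 1 - int n) / (F (int p - 1 - int i) * F (int p - 1 - int n1)) = (hb * of_int (int p - int n - 1) - D) / ((hb * of_int (int p - int n) - D) * (hb * of_int (int p - int i - 1) - D))"
            unfolding e F_def by (simp add: mult.commute)
        qed
      qed
      show ?thesis using own other by (rule conjI)
    qed
    then show "\<forall>(s, p) \<in> Aset N l pp lam i.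
      (\<Prod>p'\<in>{1..i-1}. Lm N pp r lam s i p s p')
        / (\<Prod>p'\<in>{1..i} - {p}. nu N pp r lam s i p - nu N pp r lam s i p')
        = - (1 / of_int (int p - int i - 1))
      \<and> (\<forall>s'\<in>{1..l}. s' \<noteq> s \<longrightarrow>
          (let D = aa N pp r s - aa N pp r s';
               Q = (\<Prod>p'\<in>{1..i-1}. Lm N pp r lam s i p s' p')
                   / (\<Prod>p'\<in>{1..i}. nu N pp r lam s i p - nu N pp r lam s' i p');
               li = lcnt lam s' i; lim = lcnt lam s' (i-1)
           in (lim = li \<longrightarrow> Q = 1 / (hb * of_int (int p - int i - 1) - D))
            \<and> (lim + 1 = li \<and> li = i \<longrightarrow> Q = 1 / (hb * of_int (int p - int i) - D))
            \<and> (lim + 1 = li \<and> li \<noteq> i \<longrightarrow>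
                 Q = (hb * of_int (int p - int li - 1) - D)
                     / ((hb * of_int (int p - int li) - D) * (hb * of_int (int p - int i - 1) - D)))))" by blast
  qed
qed


end
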